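(* Let $(S,* )$ be a finite cycle set of size $n$ and Dehornoy class $d>1$, and let $d=p_1^{a_1}\cdots p_r^{a_r}$ be the prime factorization of $d$ (the $p_i$ pairwise distinct, $a_i\ge 1$). Then there exist cycle set structures $*_1,\dots,*_r$ on the same set $S$ such that the class $d_i$ of $(S,*_i)$ is a power of $p_i$ for each $i$, and the germ $\overline G$ of $(S,* )$ is the product set $$\overline G=\iota_{d_1}^{d}(\overline G_1)\,\iota_{d_2}^{d}(\overline G_2)\cdots\iota_{d_r}^{d}(\overline G_r),$$ where $\overline G_i$ is the germ of $(S,*_i)$. That is, every cycle set is obtained as a Zappa–Szép product of cycle sets whose classes are prime powers.
   Context: A cycle set is a set $S$ with a binary operation $*$ such that for every $s\in S$ the map $t\mapsto s*t$ is a bijection of $S$, and $(s*t)*(s*u)=(t*s)*(t*u)$ for all $s,t,u\in S$. For a finite cycle set $S=\{s_1,\dots,s_n\}$, let $\psi(s)\in\mathfrak S_n$ be the permutation with $s_i*s_j=s_{\psi(s_i)(j)}$, and let $T(s)=s*s$. For $k\ge 0$ put $\psi_k(s)=\psi(T^{k-1}(s))\circ\cdots\circ\psi(T(s))\circ\psi(s)$ ($\psi_0(s)=\mathrm{id}$). The (Dehornoy) class of $S$ is the smallest integer $d\ge 1$ with $\psi_d(s)=\mathrm{id}$ for all $s\in S$ (it exists). For $\sigma\in\mathfrak S_n$, $P_\sigma$ is the $n\times n$ matrix with entry $1$ at position $(i,\sigma(i))$ and $0$ elsewhere. Let $\zeta_m=e^{2i\pi/m}$. The germ of a cycle set of class $d$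 on $S$ is the subgroup of $GL_n(\mathbb C)$ generated by the matrices $\bar s_i=\mathrm{diag}(1,\dots,1,\zeta_d,1,\dots,1)P_{\psi(s_i)}$ ($\zeta_d$ in the $i$-th diagonal position), $1\le i\le n$; it is a group of monomial matrices whose nonzero entries are $d$-th roots of unity. For $m\mid d$, $\iota_m^{d}$ denotes the embedding of the group of $n\times n$ monomial matrices with nonzero entries in the $m$-th roots of unity into the analogous group for $d$-th roots of unity, obtained by replacing each entry $\zeta_m^{j}$ by $\zeta_d^{jd/m}$. For subsets $A,B$ of a group, $AB=\{ab: a\in A,b\in B\}$. *)

theory Defs
  imports Complex_Main "HOL-Computational_Algebra.Primes" "Jordan_Normal_Form.Matrix"
begin

text \<open>A finite set S of size n is identified with the index set {0..<n};
  the operation * is a function op :: nat => nat => nat, relevant on {0..<n}.\<close>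

definition cycle_set :: "nat \<Rightarrow> (nat \<Rightarrow> nat \<Rightarrow> nat) \<Rightarrow> bool" where
  "cycle_set n op \<longleftrightarrow>
     (\<forall>s<n. bij_betw (op s) {..<n} {..<n}) \<and>
     (\<forall>s<n. \<forall>t<n. \<forall>u<n. op (op s t) (op s u) = op (op t s) (op t u))"

definition cs_psi :: "(nat \<Rightarrow> nat \<Rightarrow> nat) \<Rightarrow> nat \<Rightarrow> nat \<Rightarrow> nat" where
  "cs_psi op s = (\<lambda>j. op s j)"

definition cs_T :: "(nat \<Rightarrow> nat \<Rightarrow> nat) \<Rightarrow> nat \<Rightarrow> nat" where
  "cs_T op s = op s s"

fun cs_psik :: "(nat \<Rightarrow> nat \<Rightarrow> nat) \<Rightarrow> nat \<Rightarrow> nat \<Rightarrow> nat \<Rightarrow> nat" where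
  "cs_psik op 0 s = id"
| "cs_psik op (Suc k) s = cs_psik op k (cs_T op s) \<circ> cs_psi op s"

definition cs_class :: "nat \<Rightarrow> (nat \<Rightarrow> nat \<Rightarrow> nat) \<Rightarrow> nat" where
  "cs_class n op = (LEAST d. d \<ge> 1 \<and> (\<forall>s<n. \<forall>j<n. cs_psik op d s j = j))"

definition zeta :: "nat \<Rightarrow> complex" where
  "zeta m = cis (2 * pi / real m)"

definition perm_mat :: "nat \<Rightarrow> (nat \<Rightarrow> nat) \<Rightarrow> complex mat" where
  "perm_mat n \<sigma> = mat n n (\<lambda>(i,j). if j = \<sigma> i then 1 else 0)"

definition diag_at :: "nat \<Rightarrow> nat \<Rightarrow> complex \<Rightarrow> complex mat" where
  "diag_at n s z = mat n n (\<lambda>(i,j). if i = j then (if i = s then z else 1) else 0)"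

definition germ_gen :: "nat \<Rightarrow> (nat \<Rightarrow> nat \<Rightarrow> nat) \<Rightarrow> nat \<Rightarrow> complex mat" where
  "germ_gen n op s = diag_at n s (zeta (cs_class n op)) * perm_mat n (cs_psi op s)"

inductive_set gen_subgroup :: "nat \<Rightarrow> complex mat set \<Rightarrow> complex mat set"
  for n :: nat and X :: "complex mat set" where
  one: "1\<^sub>m n \<in> gen_subgroup n X"
| gen: "A \<in> X \<Longrightarrow> A \<in> gen_subgroup n X"
| mult: "A \<in> gen_subgroup n X \<Longrightarrow> B \<in> gen_subgroup n X \<Longrightarrow> A * B \<in> gen_subgroup n X"
| inv: "A \<in> gen_subgroup n X \<Longrightarrow> B \<in> carrier_mat n n \<Longrightarrow> B * A = 1\<^sub>m n \<Longrightarrow> A * B = 1\<^sub>m n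
        \<Longrightarrow> B \<in> gen_subgroup n X"

definition germ :: "nat \<Rightarrow> (nat \<Rightarrow> nat \<Rightarrow> nat) \<Rightarrow> complex mat set" where
  "germ n op = gen_subgroup n (germ_gen n op ` {..<n})"

definition iota_entry :: "nat \<Rightarrow> nat \<Rightarrow> complex \<Rightarrow> complex" where
  "iota_entry m d z = (if z = 0 then 0
     else zeta d ^ ((SOME j. j < m \<and> z = zeta m ^ j) * (d div m)))"

definition iota :: "nat \<Rightarrow> nat \<Rightarrow> complex mat \<Rightarrow> complex mat" where
  "iota m d A = map_mat (iota_entry m d) A"

definition set_mult :: "complex mat set \<Rightarrow> complex mat set \<Rightarrow> complex mat set" where
  "set_mult A B = {a * b | a b. a \<in> A \<and> b \<in> B}"

definition set_prod_list :: "nat \<Rightarrow> complex mat set list \<Rightarrow> complex mat set" where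
  "set_prod_list n As = foldr set_mult As {1\<^sub>m n}"

end

theory Submission
  imports Defs
begin


definition unitv :: "nat \<Rightarrow> nat \<Rightarrow> nat" where
  "unitv s = (\<lambda>i. if i = s then 1 else 0)"

definition pmult :: "(nat \<Rightarrow> nat) \<times> (nat \<Rightarrow> nat) \<Rightarrow> (nat \<Rightarrow> nat) \<times> (nat \<Rightarrow> nat) \<Rightarrow> (nat \<Rightarrow> nat) \<times> (nat \<Rightarrow> nat)" where
  "pmult x y = (\<lambda>i. fst x i + fst y (snd x i), snd y \<circ> snd x)"

lemma pmult_assoc: "pmult (pmult x y) z = pmult x (pmult y z)"
  by (simp add: pmult_def comp_def add.assoc)

lemma pmult_unit: "pmult (\<lambda>_. 0, id) x = x" "pmult x (\<lambda>_. 0, id) = x"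
  by (simp_all add: pmult_def)

abbreviation pinv :: "(nat \<Rightarrow> nat) \<Rightarrow> nat \<Rightarrow> nat" where "pinv f \<equiv> inv_into UNIV f"

definition rperm :: "nat \<Rightarrow> (nat \<Rightarrow> nat) \<Rightarrow> bool" where
  "rperm n \<sigma> \<longleftrightarrow> bij \<sigma> \<and> (\<forall>j\<ge>n. \<sigma> j = j)"

lemma rperm_lt: assumes "rperm n \<sigma>" "j < n" shows "\<sigma> j < n"
proof (rule ccontr)
  assume "\<not> \<sigma> j < n"
  then have "\<sigma> (\<sigma> j) = \<sigma> j" using assms(1) by (simp add: rperm_def)
  then have "\<sigma> j = j" using assms(1) unfolding rperm_def bij_def by (meson injD)
  then show False using \<open>\<not> \<sigma> j < n\<close> assms(2) by simp
qed

lemma rperm_id: "rperm n id" by (simp add: rperm_def)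

lemma rperm_comp: "rperm n \<sigma> \<Longrightarrow> rperm n \<tau> \<Longrightarrow> rperm n (\<tau> \<circ> \<sigma>)"
  by (simp add: rperm_def bij_comp)

lemma rperm_inv: assumes "rperm n \<sigma>" shows "rperm n (pinv \<sigma>)"
proof -
  have b: "bij \<sigma>" using assms by (simp add: rperm_def)
  have "\<forall>j\<ge>n. pinv \<sigma> j = j"
  proof (intro allI impI)
    fix j assume "j \<ge> n"
    then have "\<sigma> j = j" using assms by (simp add: rperm_def)
    then show "pinv \<sigma> j = j" using b by (metis bij_def inv_f_f)
  qed
  then show ?thesis using b by (simp add: rperm_def bij_imp_bij_inv)
qed

lemma rperm_inv_f: "rperm n \<sigma> \<Longrightarrow> pinv \<sigma> (\<sigma> x) = x"
  by (simp add: rperm_def bij_def inv_f_f)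

lemma rperm_f_inv: "rperm n \<sigma> \<Longrightarrow> \<sigma> (pinv \<sigma> x) = x"
  by (simp add: rperm_def bij_def surj_f_inv_f)

lemma rperm_inj: "rperm n \<sigma> \<Longrightarrow> \<sigma> x = \<sigma> y \<longleftrightarrow> x = y"
  by (metis rperm_inv_f)

lemma rperm_bij_betw: assumes "rperm n \<sigma>" shows "bij_betw \<sigma> {..<n} {..<n}"
proof -
  have "inj_on \<sigma> {..<n}" using assms by (meson inj_onI rperm_inj)
  moreover have "\<sigma> ` {..<n} = {..<n}"
  proof
    show "\<sigma> ` {..<n} \<subseteq> {..<n}" using rperm_lt[OF assms] by auto
    show "{..<n} \<subseteq> \<sigma> ` {..<n}"
    proof
      fix y assume "y \<in> {..<n}"
      then have "pinv \<sigma> y < n" using rperm_lt[OF rperm_inv[OF assms]] by auto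
      moreover have "y = \<sigma> (pinv \<sigma> y)" using rperm_f_inv[OF assms] by simp
      ultimately show "y \<in> \<sigma> ` {..<n}" by blast
    qed
  qed
  ultimately show ?thesis by (simp add: bij_betw_def)
qed

definition supp0 :: "nat \<Rightarrow> (nat \<Rightarrow> nat) \<Rightarrow> bool" where
  "supp0 n v \<longleftrightarrow> (\<forall>i\<ge>n. v i = 0)"

definition tot :: "nat \<Rightarrow> (nat \<Rightarrow> nat) \<Rightarrow> nat" where
  "tot n v = (\<Sum>i<n. v i)"

lemma tot_perm: "rperm n \<sigma> \<Longrightarrow> tot n (\<lambda>i. v (\<sigma> i)) = tot n v"
  unfolding tot_def using sum.reindex_bij_betw[OF rperm_bij_betw] by blast

lemma tot_unitv: "s < n \<Longrightarrow> tot n (unitv s) = 1"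
  by (simp add: tot_def unitv_def)

lemma tot_add: "tot n (\<lambda>i. v i + w i) = tot n v + tot n w"
  by (simp add: tot_def sum.distrib)

lemma tot_zero: assumes "supp0 n v" "tot n v = 0" shows "v = (\<lambda>_. 0)"
proof
  fix i show "v i = 0"
  proof (cases "i < n")
    case True then show ?thesis using assms(2) by (simp add: tot_def)
  next
    case False then show ?thesis using assms(1) by (simp add: supp0_def)
  qed
qed

lemma supp0_comp: "supp0 n v \<Longrightarrow> rperm n \<sigma> \<Longrightarrow> supp0 n (\<lambda>i. v (\<sigma> i))"
  by (simp add: supp0_def rperm_def)

locale cset =
  fixes n :: nat and op :: "nat \<Rightarrow> nat \<Rightarrow> nat"
  assumes cs: "cycle_set n op"
begin

lemma op_bij: "s < n \<Longrightarrow> bij_betw (op s) {..<n} {..<n}"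
  using cs by (simp add: cycle_set_def)

lemma op_lt: "s < n \<Longrightarrow> j < n \<Longrightarrow> op s j < n"
  using op_bij by (meson bij_betwE lessThan_iff)

lemma op_ax: "s < n \<Longrightarrow> t < n \<Longrightarrow> u < n \<Longrightarrow> op (op s t) (op s u) = op (op t s) (op t u)"
  using cs by (simp add: cycle_set_def)

definition P :: "nat \<Rightarrow> nat \<Rightarrow> nat" where
  "P s = (\<lambda>j. if j < n then op s j else j)"

lemma P_rperm: assumes "s < n" shows "rperm n (P s)"
proof -
  have bb: "bij_betw (op s) {..<n} {..<n}" using op_bij assms by simp
  then have io: "inj_on (op s) {..<n}" and im: "op s ` {..<n} = {..<n}" by (auto simp: bij_betw_def)
  have "inj (P s)"
  proof (rule injI)
    fix a b assume ab: "P s a = P s b"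
    show "a = b"
    proof (cases "a < n")
      case True
      note a = True
      show ?thesis
      proof (cases "b < n")
        case True
        then show ?thesis using a ab io unfolding P_def inj_on_def by simp
      next
        case False
        then show ?thesis using a ab op_lt[OF assms a] unfolding P_def by simp
      qed
    next
      case False
      note a = False
      show ?thesis
      proof (cases "b < n")
        case True
        then show ?thesis using a ab op_lt[OF assms True] unfolding P_def by simp
      next
        case False
        then show ?thesis using a ab unfolding P_def by simp
      qed
    qed
  qed
  moreover have "surj (P s)"
  proof -
    have "y \<in> range (P s)" for y
    proof (cases "y < n")
      case True
      then have "y \<in> op s ` {..<n}" using im by simp
      then obtain x where "x < n" "op s x = y" by auto
      then have "P s x = y" unfolding P_def by simp
      then show ?thesis by (rule range_eqI[OF sym])
    next
      case False
      then have "P s y = y" unfolding P_def by simp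
      then show ?thesis by (rule range_eqI[OF sym])
    qed
    then show ?thesis by auto
  qed
  ultimately show ?thesis by (simp add: rperm_def bij_def P_def)
qed

lemma P_ax: assumes "s < n" "t < n" shows "P (op s t) \<circ> P s = P (op t s) \<circ> P t"
proof
  fix j show "(P (op s t) \<circ> P s) j = (P (op t s) \<circ> P t) j"
    using assms op_lt op_ax by (simp add: P_def)
qed

fun ev :: "nat list \<Rightarrow> (nat \<Rightarrow> nat) \<times> (nat \<Rightarrow> nat)" where
  "ev [] = (\<lambda>_. 0, id)"
| "ev (s # w) = pmult (unitv s, P s) (ev w)"

lemma ev_append: "ev (w1 @ w2) = pmult (ev w1) (ev w2)"
  by (induction w1) (simp_all add: pmult_unit pmult_assoc)

lemma ev_fst: "fst (ev (s # w)) = (\<lambda>i. unitv s i + fst (ev w) (P s i))"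
  by (simp add: pmult_def)

lemma ev_snd: "snd (ev (s # w)) = snd (ev w) \<circ> P s"
  by (simp add: pmult_def)

declare ev.simps(2)[simp del]

lemma ev_rperm: "set w \<subseteq> {..<n} \<Longrightarrow> rperm n (snd (ev w))"
  by (induction w) (auto simp: ev_snd rperm_id intro!: rperm_comp P_rperm)

lemma ev_supp: "set w \<subseteq> {..<n} \<Longrightarrow> supp0 n (fst (ev w))"
  by (induction w) (auto simp: ev_fst supp0_def unitv_def P_def)

lemma ev_tot: "set w \<subseteq> {..<n} \<Longrightarrow> tot n (fst (ev w)) = length w"
proof (induction w)
  case Nil then show ?case by (simp add: tot_def)
next
  case (Cons s w)
  then show ?case by (simp add: ev_fst tot_add tot_unitv tot_perm[OF P_rperm])
qed

lemma ev_exists_aux: "\<forall>v. supp0 n v \<longrightarrow> tot n v = k \<longrightarrow> (\<exists>w. set w \<subseteq> {..<n} \<and> fst (ev w) = v)"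
proof (induction k)
  case 0
  then show ?case using tot_zero by (metis empty_subsetI ev.simps(1) fst_conv list.set(1))
next
  case (Suc k)
  show ?case
  proof (intro allI impI)
    fix v assume sv: "supp0 n v" and tv: "tot n v = Suc k"
    have "\<exists>s<n. v s > 0"
    proof (rule ccontr)
      assume "\<not> (\<exists>s<n. v s > 0)"
      then have "tot n v = 0" by (simp add: tot_def)
      then show False using tv by simp
    qed
    then obtain s where s: "s < n" "v s > 0" by blast
    define v' where "v' = (\<lambda>i. v (pinv (P s) i) - unitv s (pinv (P s) i))"
    have rp: "rperm n (pinv (P s))" using rperm_inv[OF P_rperm[OF s(1)]] .
    have "supp0 n (\<lambda>i. v i - unitv s i)" using sv s by (simp add: supp0_def unitv_def)
    then have sv': "supp0 n v'" unfolding v'_def using supp0_comp[OF _ rp] by fastforce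
    have "(\<lambda>i. v i - unitv s i + unitv s i) = v" using s by (auto simp: unitv_def)
    then have "tot n (\<lambda>i. v i - unitv s i) + tot n (unitv s) = tot n v"
      unfolding tot_add[symmetric] by simp
    then have "tot n (\<lambda>i. v i - unitv s i) = k" using tv tot_unitv[OF s(1)] by simp
    then have "tot n v' = k" unfolding v'_def using tot_perm[OF rp, of "\<lambda>i. v i - unitv s i"] by simp
    then obtain w where w: "set w \<subseteq> {..<n}" "fst (ev w) = v'" using Suc.IH sv' by auto
    have "fst (ev (s # w)) = v"
    proof
      fix i show "fst (ev (s # w)) i = v i"
        using s unfolding ev_fst w(2) v'_def rperm_inv_f[OF P_rperm[OF s(1)]]
        by (simp add: unitv_def)
    qed
    then show "\<exists>w. set w \<subseteq> {..<n} \<and> fst (ev w) = v" using w s by (intro exI[of _ "s # w"]) auto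
  qed
qed

lemma ev_exists: "supp0 n v \<Longrightarrow> \<exists>w. set w \<subseteq> {..<n} \<and> fst (ev w) = v"
  using ev_exists_aux by blast

end

context cset begin
lemma WD_aux:
  "\<forall>w1 w2. length w1 = k \<longrightarrow> set w1 \<subseteq> {..<n} \<longrightarrow> set w2 \<subseteq> {..<n} \<longrightarrow>
     fst (ev w1) = fst (ev w2) \<longrightarrow> snd (ev w1) = snd (ev w2)"
proof (induction k rule: less_induct)
  case (less k)
  have same: "snd (ev (s # x)) = snd (ev (s # y))"
    if "s < n" "set x \<subseteq> {..<n}" "set y \<subseteq> {..<n}" "length x < k"
       "fst (ev (s # x)) = fst (ev (s # y))" for s x y
  proof -
    have "fst (ev x) j = fst (ev y) j" for j
    proof -
      have "fst (ev (s # x)) (pinv (P s) j) = fst (ev (s # y)) (pinv (P s) j)" using that(5) by simp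
      then show ?thesis unfolding ev_fst rperm_f_inv[OF P_rperm[OF that(1)]] by simp
    qed
    then have "fst (ev x) = fst (ev y)" by auto
    then have "snd (ev x) = snd (ev y)" by (rule less.IH[OF that(4), rule_format, OF refl that(2) that(3)])
    then show ?thesis by (simp add: ev_snd)
  qed
  show ?case
  proof (intro allI impI)
    fix w1 w2 :: "nat list"
    assume len: "length w1 = k" and s1: "set w1 \<subseteq> {..<n}" and s2: "set w2 \<subseteq> {..<n}"
      and eq: "fst (ev w1) = fst (ev w2)"
    have ll: "length w1 = length w2" using ev_tot[OF s1] ev_tot[OF s2] eq by simp
    show "snd (ev w1) = snd (ev w2)"
    proof (cases w1)
      case Nil
      then show ?thesis using ll by simp
    next
      case (Cons s x1)
      then obtain t x2 where w2: "w2 = t # x2" using ll by (cases w2) auto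
      have s: "s < n" and x1: "set x1 \<subseteq> {..<n}" using s1 Cons by auto
      have t: "t < n" and x2: "set x2 \<subseteq> {..<n}" using s2 w2 by auto
      have lx1: "length x1 < k" using len Cons by simp
      have lx2: "length x2 < k" using len ll w2 by simp
      show ?thesis
      proof (cases "s = t")
        case True
        then show ?thesis using same[OF s x1 x2 lx1] eq Cons w2 by simp
      next
        case False
        define v where "v = fst (ev w1)"
        have vs: "v s \<ge> 1" unfolding v_def Cons ev_fst by (simp add: unitv_def)
        have vt: "v t \<ge> 1" unfolding v_def eq w2 ev_fst by (simp add: unitv_def)
        define u where "u = op s t"
        define u' where "u' = op t s"
        have u: "u < n" "u' < n" using op_lt s t u_def u'_def by auto
        define R where "R = P u \<circ> P s"
        have R': "P u' \<circ> P t = R" unfolding R_def u_def u'_def using P_ax[OF s t] by simp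
        have rR: "rperm n R" unfolding R_def using P_rperm s u by (simp add: rperm_comp)
        define z where "z = (\<lambda>i. v (pinv R i) - unitv s (pinv R i) - unitv t (pinv R i))"
        have "supp0 n (\<lambda>i. v i - unitv s i - unitv t i)"
          using ev_supp[OF s1] s t unfolding v_def supp0_def unitv_def by auto
        then have "supp0 n z" unfolding z_def using supp0_comp[OF _ rperm_inv[OF rR]] by fastforce
        then obtain x3 where x3: "set x3 \<subseteq> {..<n}" "fst (ev x3) = z" using ev_exists by blast
        have zR: "z (R i) = v i - unitv s i - unitv t i" for i
          unfolding z_def rperm_inv_f[OF rR] ..
        have Pst: "P s t = u" unfolding P_def u_def using t by simp
        have Pts: "P t s = u'" unfolding P_def u'_def using s by simp
        have e1: "fst (ev (s # u # x3)) = v"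
        proof
          fix i
          have "unitv u (P s i) = unitv t i"
            unfolding unitv_def Pst[symmetric] rperm_inj[OF P_rperm[OF s]] ..
          moreover have "z (P u (P s i)) = v i - unitv s i - unitv t i"
            using zR[of i] unfolding R_def by simp
          moreover have le: "unitv s i + unitv t i \<le> v i" using vs vt False by (auto simp: unitv_def)
          ultimately have "fst (ev (s # u # x3)) i = unitv s i + (unitv t i + (v i - unitv s i - unitv t i))"
            unfolding ev_fst x3(2) by simp
          then show "fst (ev (s # u # x3)) i = v i" using le by simp
        qed
        have e2: "fst (ev (t # u' # x3)) = v"
        proof
          fix i
          have "unitv u' (P t i) = unitv s i"
            unfolding unitv_def Pts[symmetric] rperm_inj[OF P_rperm[OF t]] ..
          moreover have "z (P u' (P t i)) = v i - unitv s i - unitv t i"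
            using zR[of i] unfolding R'[symmetric] by simp
          moreover have le: "unitv s i + unitv t i \<le> v i" using vs vt False by (auto simp: unitv_def)
          ultimately have "fst (ev (t # u' # x3)) i = unitv t i + (unitv s i + (v i - unitv s i - unitv t i))"
            unfolding ev_fst x3(2) by simp
          then show "fst (ev (t # u' # x3)) i = v i" using le by simp
        qed
        have "snd (ev (s # u # x3)) = snd (ev (t # u' # x3))"
          unfolding ev_snd using R' unfolding R_def by (simp add: comp_assoc)
        moreover have "snd (ev w1) = snd (ev (s # u # x3))"
          unfolding Cons using same[OF s x1 _ lx1, of "u # x3"] x3 u e1 v_def Cons by simp
        moreover have "snd (ev w2) = snd (ev (t # u' # x3))"
          unfolding w2 using same[OF t x2 _ lx2, of "u' # x3"] x3 u e2 v_def eq w2 by simp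
        ultimately show ?thesis by simp
      qed
    qed
  qed
qed

lemma WD: assumes "set w1 \<subseteq> {..<n}" "set w2 \<subseteq> {..<n}" "fst (ev w1) = fst (ev w2)"
  shows "snd (ev w1) = snd (ev w2)"
  by (rule WD_aux[rule_format, OF refl assms])

lemma WD': assumes "set w1 \<subseteq> {..<n}" "set w2 \<subseteq> {..<n}" "fst (ev w1) = fst (ev w2)"
  shows "ev w1 = ev w2"
  using WD[OF assms] assms(3) by (simp add: prod_eq_iff)

end


lemma rperm_eq: assumes "rperm n \<sigma>" "rperm n \<tau>" "\<And>j. j < n \<Longrightarrow> \<sigma> j = \<tau> j" shows "\<sigma> = \<tau>"
proof
  fix j show "\<sigma> j = \<tau> j" using assms by (cases "j < n") (auto simp: rperm_def)
qed

lemma finite_rperm: "finite {\<sigma>. rperm n \<sigma>}"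
proof -
  let ?F = "\<lambda>\<sigma>. map \<sigma> [0..<n]"
  have "inj_on ?F {\<sigma>. rperm n \<sigma>}"
  proof (rule inj_onI)
    fix \<sigma> \<tau> assume a: "\<sigma> \<in> {\<sigma>. rperm n \<sigma>}" "\<tau> \<in> {\<sigma>. rperm n \<sigma>}" and e: "?F \<sigma> = ?F \<tau>"
    have "\<sigma> j = \<tau> j" if "j < n" for j
    proof -
      show ?thesis using e that by (auto simp: map_eq_conv)
    qed
    then show "\<sigma> = \<tau>" using a rperm_eq by blast
  qed
  moreover have "?F ` {\<sigma>. rperm n \<sigma>} \<subseteq> {xs. set xs \<subseteq> {..<n} \<and> length xs = n}"
    using rperm_lt by fastforce
  moreover have "finite {xs. set xs \<subseteq> {..<n} \<and> length xs = n}"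
    using finite_lists_length_eq[of "{..<n}" n] by simp
  ultimately show ?thesis using finite_imageD finite_subset by metis
qed

lemma rperm_funpow: "rperm n \<sigma> \<Longrightarrow> rperm n (\<sigma> ^^ k)"
  by (induction k) (auto simp: rperm_id intro: rperm_comp)

lemma pigeon:
  fixes f :: "nat \<Rightarrow> 'a"
  assumes "\<And>k. f k \<in> A" "finite A"
  shows "\<exists>a b. a < b \<and> f a = f b"
proof (rule ccontr)
  assume "\<not> ?thesis"
  then have "inj_on f {0..card A}"
    unfolding inj_on_def by (metis linorder_neqE_nat)
  then have "card {0..card A} \<le> card A"
    using card_inj_on_le[of f "{0..card A}" A] assms by auto
  then show False by simp
qed

lemma rperm_period: assumes "rperm n \<sigma>" shows "\<exists>K\<ge>1. \<sigma> ^^ K = id"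
proof -
  obtain a b where ab: "a < b" "\<sigma> ^^ a = \<sigma> ^^ b"
    using pigeon[of "\<lambda>k. \<sigma> ^^ k" "{\<sigma>. rperm n \<sigma>}"] finite_rperm rperm_funpow[OF assms] by blast
  have r: "rperm n (\<sigma> ^^ a)" using rperm_funpow[OF assms] .
  have e: "\<sigma> ^^ b = \<sigma> ^^ (b - a) \<circ> \<sigma> ^^ a" using ab(1) by (simp add: funpow_add[symmetric])
  have "(\<sigma> ^^ (b - a)) x = x" for x
  proof -
    have "(\<sigma> ^^ (b - a)) ((\<sigma> ^^ a) (pinv (\<sigma> ^^ a) x)) = (\<sigma> ^^ a) (pinv (\<sigma> ^^ a) x)"
      using e ab(2) by (metis comp_apply)
    then show ?thesis using rperm_f_inv[OF r] by simp
  qed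
  then show ?thesis using ab(1) by (intro exI[of _ "b - a"]) auto
qed

context cset begin

lemma T_lt: "s < n \<Longrightarrow> cs_T op s < n"
  by (simp add: cs_T_def op_lt)

lemma Tpow_lt: "s < n \<Longrightarrow> (cs_T op ^^ k) s < n"
  by (induction k) (auto simp: T_lt)

lemma psik_lt: "s < n \<Longrightarrow> j < n \<Longrightarrow> cs_psik op k s j < n"
  by (induction k arbitrary: s j) (auto simp: cs_psi_def op_lt T_lt)

lemma psik_self: "cs_psik op k s s = (cs_T op ^^ k) s"
proof (induction k arbitrary: s)
  case 0 then show ?case by simp
next
  case (Suc k)
  have "cs_psik op (Suc k) s s = cs_psik op k (cs_T op s) (cs_T op s)"
    by (simp add: cs_psi_def cs_T_def)
  also have "\<dots> = (cs_T op ^^ k) (cs_T op s)" using Suc by simp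
  finally show ?case by (simp add: funpow_swap1)
qed

lemma psik_add: "cs_psik op (a + b) s j = cs_psik op b ((cs_T op ^^ a) s) (cs_psik op a s j)"
proof (induction a arbitrary: s j)
  case 0 then show ?case by simp
next
  case (Suc a)
  have "cs_psik op (Suc a + b) s j = cs_psik op (a + b) (cs_T op s) (cs_psi op s j)" by simp
  also have "\<dots> = cs_psik op b ((cs_T op ^^ a) (cs_T op s)) (cs_psik op a (cs_T op s) (cs_psi op s j))"
    using Suc by simp
  finally show ?case by (simp add: funpow_swap1)
qed

fun chain :: "nat \<Rightarrow> nat \<Rightarrow> nat list" where
  "chain s 0 = []"
| "chain s (Suc k) = s # chain (cs_T op s) k"

lemma chain_set: "s < n \<Longrightarrow> set (chain s k) \<subseteq> {..<n}"
  by (induction k arbitrary: s) (auto simp: T_lt)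

lemma chain_add: "chain s (a + b) = chain s a @ chain ((cs_T op ^^ a) s) b"
  by (induction a arbitrary: s) (auto simp: funpow_swap1)

lemma ev_chain_fst: "s < n \<Longrightarrow> fst (ev (chain s k)) = (\<lambda>i. k * unitv s i)"
proof (induction k arbitrary: s)
  case 0 then show ?case by simp
next
  case (Suc k)
  have ts: "cs_T op s < n" using T_lt Suc by simp
  show ?case
  proof
    fix i
    have "unitv (cs_T op s) (P s i) = unitv s i"
    proof -
      have "P s s = cs_T op s" using Suc by (simp add: P_def cs_T_def)
      then show ?thesis unfolding unitv_def using rperm_inj[OF P_rperm[OF Suc.prems]] by metis
    qed
    then show "fst (ev (chain s (Suc k))) i = Suc k * unitv s i"
      by (simp add: ev_fst Suc.IH[OF ts])
  qed
qed

lemma ev_chain_snd: "s < n \<Longrightarrow> j < n \<Longrightarrow> snd (ev (chain s k)) j = cs_psik op k s j"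
proof (induction k arbitrary: s j)
  case 0 then show ?case by simp
next
  case (Suc k)
  have "snd (ev (chain s (Suc k))) j = snd (ev (chain (cs_T op s) k)) (op s j)"
    using Suc.prems by (simp add: ev_snd P_def)
  also have "\<dots> = cs_psik op k (cs_T op s) (op s j)"
    using Suc.IH T_lt op_lt Suc.prems by simp
  finally show ?case by (simp add: cs_psi_def)
qed

lemma ev_pow: "snd (ev (concat (replicate K w))) = snd (ev w) ^^ K"
  by (induction K) (simp_all add: ev_append pmult_def funpow_swap1)

lemma fix_exists: assumes s: "s < n" shows "\<exists>c\<ge>1. \<forall>j<n. cs_psik op c s j = j"
proof -
  let ?f = "\<lambda>k. snd (ev (chain s k))"
  obtain a b where ab: "a < b" "?f a = ?f b"
    using pigeon[of ?f "{\<sigma>. rperm n \<sigma>}"] finite_rperm ev_rperm[OF chain_set[OF s]] by blast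
  define w where "w = chain s a"
  have ws: "set w \<subseteq> {..<n}" using chain_set[OF s] w_def by simp
  obtain K where K: "K \<ge> 1" "snd (ev w) ^^ K = id" using rperm_period[OF ev_rperm[OF ws]] by blast
  define y where "y = concat (replicate (K - 1) w)"
  have ys: "set y \<subseteq> {..<n}" using ws y_def by auto
  have wy: "w @ y = concat (replicate K w)"
    using K(1) unfolding y_def by (metis Suc_diff_1 concat.simps(2) less_eq_Suc_le replicate_Suc One_nat_def)
  define V where "V = fst (ev (w @ y))"
  have sid: "snd (ev (w @ y)) = id" using wy ev_pow K by simp
  have e1: "ev (chain s b @ y) = (\<lambda>i. (b - a) * unitv s i + V i, id)"
  proof -
    have "snd (ev (chain s b @ y)) = snd (ev (w @ y))"
      using ab(2) w_def by (simp add: ev_append pmult_def)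
    moreover have "fst (ev (chain s b @ y)) i = (b - a) * unitv s i + V i" for i
    proof -
      have "fst (ev (chain s b @ y)) i = b * unitv s i + fst (ev y) (?f b i)"
        by (simp add: ev_append pmult_def ev_chain_fst[OF s])
      moreover have "V i = a * unitv s i + fst (ev y) (?f a i)"
        unfolding V_def w_def by (simp add: ev_append pmult_def ev_chain_fst[OF s])
      moreover have "a * unitv s i \<le> b * unitv s i" using ab(1) by simp
      moreover have "(b - a) * unitv s i = b * unitv s i - a * unitv s i" by (simp add: diff_mult_distrib)
      ultimately show ?thesis using ab(2) by simp
    qed
    ultimately show ?thesis using sid by (simp add: prod_eq_iff fun_eq_iff)
  qed
  have e2: "ev ((w @ y) @ chain s (b - a)) = (\<lambda>i. V i + (b - a) * unitv s i, ?f (b - a))"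
  proof -
    have "ev ((w @ y) @ chain s (b - a)) = pmult (ev (w @ y)) (ev (chain s (b - a)))" by (rule ev_append)
    also have "\<dots> = (\<lambda>i. V i + (b - a) * unitv s i, ?f (b - a))"
      using sid unfolding V_def by (simp add: pmult_def ev_chain_fst[OF s])
    finally show ?thesis .
  qed
  have "?f (b - a) = id"
  proof -
    have fe: "fst (ev ((w @ y) @ chain s (b - a))) = fst (ev (chain s b @ y))"
      using e1 e2 by (simp add: add.commute)
    have "snd (ev ((w @ y) @ chain s (b - a))) = snd (ev (chain s b @ y))"
      by (rule WD[OF _ _ fe]) (use ws ys chain_set[OF s] in auto)
    then show ?thesis using e1 e2 by simp
  qed
  then have "\<forall>j<n. cs_psik op (b - a) s j = j" using ev_chain_snd[OF s] by (metis id_apply)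
  then show ?thesis using ab(1) by (intro exI[of _ "b - a"]) auto
qed

definition Fix :: "nat \<Rightarrow> bool" where
  "Fix k \<longleftrightarrow> (\<forall>s<n. \<forall>j<n. cs_psik op k s j = j)"

lemma Fix_T: "Fix k \<Longrightarrow> s < n \<Longrightarrow> (cs_T op ^^ k) s = s"
  using psik_self unfolding Fix_def by metis

lemma Fix_add: assumes "Fix a" shows "Fix (a + b) \<longleftrightarrow> Fix b"
proof -
  have "cs_psik op (a + b) s j = cs_psik op b s j" if "s < n" "j < n" for s j
    using psik_add[of a b s j] Fix_T[OF assms that(1)] assms that unfolding Fix_def by simp
  then show ?thesis unfolding Fix_def by simp
qed

lemma Fix_0: "Fix 0" by (simp add: Fix_def)

lemma Fix_mult: "Fix c \<Longrightarrow> Fix (c * q)"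
proof (induction q)
  case 0 then show ?case by (simp add: Fix_0)
next
  case (Suc q)
  then have "Fix (c * q + c)" using Fix_add[of "c * q" c] by simp
  then show ?case by (simp add: add.commute)
qed

lemma class_exists: "\<exists>D\<ge>1. Fix D"
proof -
  have "\<forall>s. \<exists>c. s < n \<longrightarrow> c \<ge> 1 \<and> (\<forall>j<n. cs_psik op c s j = j)" using fix_exists by blast
  then obtain c where c: "\<And>s. s < n \<Longrightarrow> c s \<ge> 1 \<and> (\<forall>j<n. cs_psik op (c s) s j = j)" by metis
  define D where "D = (\<Prod>s<n. c s)"
  have D1: "D \<ge> 1" unfolding D_def using c by (simp add: Suc_le_eq prod_pos)
  have "cs_psik op D s j = j" if "s < n" "j < n" for s j
  proof -
    have "c s dvd D" unfolding D_def using that by (simp add: dvd_prodI)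
    then obtain q where q: "D = c s * q" by blast
    have "(\<forall>j<n. cs_psik op (c s * q') s j = j) \<and> (cs_T op ^^ (c s * q')) s = s" for q'
    proof (induction q')
      case 0 then show ?case by simp
    next
      case (Suc q')
      have A: "cs_psik op (c s * Suc q') s j' = cs_psik op (c s) s (cs_psik op (c s * q') s j')" for j'
        using psik_add[of "c s * q'" "c s" s j'] Suc by (simp add: add.commute)
      have B: "\<forall>j<n. cs_psik op (c s * Suc q') s j = j" using A Suc c[OF \<open>s < n\<close>] by simp
      then show ?case using psik_self[of "c s * Suc q'" s] \<open>s < n\<close> by simp
    qed
    then show ?thesis using q that by simp
  qed
  then show ?thesis using D1 unfolding Fix_def by blast
qed

definition d :: nat where "d = cs_class n op"

lemma d_props: "d \<ge> 1" "Fix d" "\<And>k. k \<ge> 1 \<Longrightarrow> Fix k \<Longrightarrow> d \<le> k"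
proof -
  have e: "\<exists>D. D \<ge> 1 \<and> (\<forall>s<n. \<forall>j<n. cs_psik op D s j = j)" using class_exists unfolding Fix_def by blast
  have "d \<ge> 1 \<and> Fix d" unfolding d_def cs_class_def Fix_def by (rule LeastI_ex[OF e])
  then show "d \<ge> 1" "Fix d" by auto
  show "\<And>k. k \<ge> 1 \<Longrightarrow> Fix k \<Longrightarrow> d \<le> k" unfolding d_def cs_class_def Fix_def
    by (rule Least_le) simp
qed

lemma Fix_iff: "Fix k \<longleftrightarrow> d dvd k"
proof
  assume "d dvd k" then show "Fix k" using Fix_mult[OF d_props(2)] by auto
next
  assume fk: "Fix k"
  have "Fix (d * (k div d))" using Fix_mult[OF d_props(2)] .
  moreover have "k = d * (k div d) + k mod d" by simp
  ultimately have "Fix (k mod d)" using fk Fix_add by metis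
  moreover have "k mod d < d" using d_props(1) by simp
  ultimately have "k mod d = 0" using d_props(3)[of "k mod d"] by (metis less_one not_le)
  then show "d dvd k" by auto
qed

end


lemma zeta_pow_self: "m \<ge> 1 \<Longrightarrow> zeta m ^ m = 1"
  unfolding zeta_def DeMoivre by (simp add: cis_2pi)

lemma zeta_pow_mod: "zeta m ^ a = zeta m ^ (a mod m)"
proof (cases "m = 0")
  case True then show ?thesis by simp
next
  case False
  have "zeta m ^ a = zeta m ^ (m * (a div m) + a mod m)" by simp
  also have "\<dots> = (zeta m ^ m) ^ (a div m) * zeta m ^ (a mod m)" by (simp only: power_add power_mult)
  also have "\<dots> = zeta m ^ (a mod m)" using zeta_pow_self[of m] False by simp
  finally show ?thesis .
qed

lemma zeta_pow_div: assumes "q \<ge> 1" "q dvd d" "d \<ge> 1" shows "zeta d ^ (d div q) = zeta q"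
proof -
  have "real (d div q) * (2 * pi / real d) = 2 * pi / real q"
    using assms by (simp add: real_of_nat_div field_simps)
  then show ?thesis unfolding zeta_def DeMoivre by simp
qed

lemma zeta_ne0: "zeta m \<noteq> 0" by (simp add: zeta_def cis_neq_zero)

definition matof :: "nat \<Rightarrow> nat \<Rightarrow> (nat \<Rightarrow> nat) \<times> (nat \<Rightarrow> nat) \<Rightarrow> complex mat" where
  "matof n m x = mat n n (\<lambda>(i,j). if j = snd x i then zeta m ^ fst x i else 0)"

lemma matof_carrier: "matof n m x \<in> carrier_mat n n"
  by (simp add: matof_def)

lemma mat_mult_mat: "mat n n f * mat n n g = mat n n (\<lambda>(i,k). \<Sum>j\<in>{0..<n}. f (i,j) * g (j,k))"
  by (rule eq_matI) (auto simp: scalar_prod_def row_mat col_mat)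

lemma sum_single: "c < (n::nat) \<Longrightarrow> (\<Sum>j\<in>{0..<n}. (if j = c then A else 0) * g j) = (A :: complex) * g c"
proof -
  assume c: "c < n"
  have "(\<Sum>j\<in>{0..<n}. (if j = c then A else 0) * g j) = (\<Sum>j\<in>{0..<n}. if j = c then A * g j else 0)"
    by (rule sum.cong) auto
  also have "\<dots> = (if c \<in> {0..<n} then A * g c else 0)" by (rule sum.delta) simp
  also have "\<dots> = A * g c" using c by simp
  finally show ?thesis .
qed

lemma matof_mult: assumes "\<And>i. i < n \<Longrightarrow> snd x i < n"
  shows "matof n m x * matof n m y = matof n m (pmult x y)"
  unfolding matof_def mat_mult_mat
proof (rule eq_matI)
  fix i k assume ik: "i < dim_row (mat n n (\<lambda>(i, j). if j = snd (pmult x y) i then zeta m ^ fst (pmult x y) i else 0))"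
    "k < dim_col (mat n n (\<lambda>(i, j). if j = snd (pmult x y) i then zeta m ^ fst (pmult x y) i else 0))"
  then have i: "i < n" and k: "k < n" by auto
  have "(\<Sum>j\<in>{0..<n}. (if j = snd x i then zeta m ^ fst x i else 0) * (if k = snd y j then zeta m ^ fst y j else 0))
      = zeta m ^ fst x i * (if k = snd y (snd x i) then zeta m ^ fst y (snd x i) else 0)"
    by (rule sum_single[OF assms[OF i]])
  also have "\<dots> = (if k = snd (pmult x y) i then zeta m ^ fst (pmult x y) i else 0)"
    by (simp add: pmult_def power_add)
  finally show "mat n n (\<lambda>(i, k). \<Sum>j = 0..<n. (case (i, j) of (i, j) \<Rightarrow> if j = snd x i then zeta m ^ fst x i else 0) * (case (j, k) of (i, j) \<Rightarrow> if j = snd y i then zeta m ^ fst y i else 0)) $$ (i, k) =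
         mat n n (\<lambda>(i, j). if j = snd (pmult x y) i then zeta m ^ fst (pmult x y) i else 0) $$ (i, k)"
    using i k by simp
qed auto

lemma matof_one: "matof n m (\<lambda>_. 0, id) = 1\<^sub>m n"
  by (rule eq_matI) (auto simp: matof_def)

lemma matof_cong: assumes "\<And>i. i < n \<Longrightarrow> fst x i mod m = fst y i mod m" "\<And>i. i < n \<Longrightarrow> snd x i = snd y i"
  shows "matof n m x = matof n m y"
proof (rule eq_matI)
  fix i j assume "i < dim_row (matof n m y)" "j < dim_col (matof n m y)"
  then have ij: "i < n" "j < n" by (auto simp: matof_def)
  have "zeta m ^ fst x i = zeta m ^ fst y i" using zeta_pow_mod assms(1)[OF ij(1)] by metis
  then show "matof n m x $$ (i, j) = matof n m y $$ (i, j)" using ij assms(2)[OF ij(1)] by (simp add: matof_def)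
qed (auto simp: matof_def)

context cset begin

lemma chain_d: assumes s: "s < n" shows "ev (chain s d) = (\<lambda>i. d * unitv s i, id)"
proof -
  have "snd (ev (chain s d)) = id"
  proof (rule rperm_eq[OF ev_rperm[OF chain_set[OF s]] rperm_id])
    fix j assume "j < n"
    then show "snd (ev (chain s d)) j = id j" using ev_chain_snd[OF s] d_props(2) s unfolding Fix_def by simp
  qed
  then show ?thesis using ev_chain_fst[OF s] by (simp add: prod_eq_iff)
qed

lemma dsum_aux: "\<forall>y. supp0 n y \<longrightarrow> tot n y = k \<longrightarrow> (\<exists>Z. set Z \<subseteq> {..<n} \<and> ev Z = (\<lambda>i. d * y i, id))"
proof (induction k)
  case 0
  show ?case
  proof (intro allI impI)
    fix y assume "supp0 n y" "tot n y = 0"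
    then have "y = (\<lambda>_. 0)" by (rule tot_zero)
    then show "\<exists>Z. set Z \<subseteq> {..<n} \<and> ev Z = (\<lambda>i. d * y i, id)" by (intro exI[of _ "[]"]) simp
  qed
next
  case (Suc k)
  show ?case
  proof (intro allI impI)
    fix y assume sy: "supp0 n y" and ty: "tot n y = Suc k"
    have "\<exists>s<n. y s > 0"
    proof (rule ccontr)
      assume "\<not> (\<exists>s<n. y s > 0)"
      then have "tot n y = 0" by (simp add: tot_def)
      then show False using ty by simp
    qed
    then obtain s where s: "s < n" "y s > 0" by blast
    define y' where "y' = (\<lambda>i. y i - unitv s i)"
    have sy': "supp0 n y'" using sy s unfolding y'_def by (simp add: supp0_def unitv_def)
    have yy: "(\<lambda>i. y' i + unitv s i) = y" using s unfolding y'_def by (auto simp: unitv_def)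
    then have "tot n y' + tot n (unitv s) = tot n y" unfolding tot_add[symmetric] by simp
    then have "tot n y' = k" using ty tot_unitv[OF s(1)] by simp
    from Suc.IH[rule_format, OF sy' this] obtain Z where Z: "set Z \<subseteq> {..<n}" "ev Z = (\<lambda>i. d * y' i, id)" by blast
    have "ev (chain s d @ Z) = (\<lambda>i. d * y i, id)"
    proof -
      have "ev (chain s d @ Z) = pmult (\<lambda>i. d * unitv s i, id) (\<lambda>i. d * y' i, id)"
        by (simp add: ev_append chain_d[OF s(1)] Z(2))
      also have "\<dots> = (\<lambda>i. d * (y' i + unitv s i), id)" by (simp add: pmult_def algebra_simps)
      also have "\<dots> = (\<lambda>i. d * y i, id)" using fun_cong[OF yy] by simp
      finally show ?thesis .
    qed
    then show "\<exists>Z. set Z \<subseteq> {..<n} \<and> ev Z = (\<lambda>i. d * y i, id)"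
      using Z(1) chain_set[OF s(1)] by (intro exI[of _ "chain s d @ Z"]) auto
  qed
qed

lemma dsum: "supp0 n y \<Longrightarrow> \<exists>Z. set Z \<subseteq> {..<n} \<and> ev Z = (\<lambda>i. d * y i, id)"
  using dsum_aux by blast

lemma pad: assumes w: "set w \<subseteq> {..<n}" and x: "supp0 n x"
  shows "\<exists>w'. set w' \<subseteq> {..<n} \<and> ev w' = (\<lambda>i. fst (ev w) i + d * x i, snd (ev w))"
proof -
  define \<sigma> where "\<sigma> = snd (ev w)"
  have r: "rperm n \<sigma>" unfolding \<sigma>_def using ev_rperm[OF w] .
  have "supp0 n (\<lambda>i. x (pinv \<sigma> i))" using supp0_comp[OF x rperm_inv[OF r]] .
  then obtain Z where Z: "set Z \<subseteq> {..<n}" "ev Z = (\<lambda>i. d * x (pinv \<sigma> i), id)" using dsum by blast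
  have "ev (w @ Z) = (\<lambda>i. fst (ev w) i + d * x i, snd (ev w))"
    using Z(2) rperm_inv_f[OF r] unfolding \<sigma>_def by (simp add: ev_append pmult_def)
  then show ?thesis using w Z(1) by (intro exI[of _ "w @ Z"]) auto
qed

lemma WDmod: assumes w1: "set w1 \<subseteq> {..<n}" and w2: "set w2 \<subseteq> {..<n}"
  and eq: "\<And>i. fst (ev w1) i mod d = fst (ev w2) i mod d"
  shows "snd (ev w1) = snd (ev w2)"
proof -
  define v1 where "v1 = fst (ev w1)"
  define v2 where "v2 = fst (ev w2)"
  define x1 where "x1 = (\<lambda>i. (v2 i - v1 i) div d)"
  define x2 where "x2 = (\<lambda>i. (v1 i - v2 i) div d)"
  have key: "v1 i + d * x1 i = v2 i + d * x2 i" for i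
  proof (cases "v1 i \<le> v2 i")
    case True
    then have "d dvd v2 i - v1 i" using eq[of i, symmetric] mod_eq_dvd_iff_nat[OF True] unfolding v1_def v2_def by simp
    then have "d * x1 i = v2 i - v1 i" unfolding x1_def by simp
    moreover have "x2 i = 0" unfolding x2_def using True by simp
    ultimately show ?thesis using True by simp
  next
    case False
    then have le: "v2 i \<le> v1 i" by simp
    then have "d dvd v1 i - v2 i" using eq[of i] mod_eq_dvd_iff_nat[OF le] unfolding v1_def v2_def by simp
    then have "d * x2 i = v1 i - v2 i" unfolding x2_def by simp
    moreover have "x1 i = 0" unfolding x1_def using False by simp
    ultimately show ?thesis using le by simp
  qed
  have sx1: "supp0 n x1" using ev_supp[OF w1] ev_supp[OF w2] unfolding x1_def v1_def v2_def supp0_def by simp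
  have sx2: "supp0 n x2" using ev_supp[OF w1] ev_supp[OF w2] unfolding x2_def v1_def v2_def supp0_def by simp
  obtain w1' where w1': "set w1' \<subseteq> {..<n}" "ev w1' = (\<lambda>i. v1 i + d * x1 i, snd (ev w1))"
    using pad[OF w1 sx1] unfolding v1_def by blast
  obtain w2' where w2': "set w2' \<subseteq> {..<n}" "ev w2' = (\<lambda>i. v2 i + d * x2 i, snd (ev w2))"
    using pad[OF w2 sx2] unfolding v2_def by blast
  have "fst (ev w1') = fst (ev w2')" using w1'(2) w2'(2) key by simp
  then have "snd (ev w1') = snd (ev w2')" by (rule WD[OF w1'(1) w2'(1)])
  then show ?thesis using w1'(2) w2'(2) by simp
qed

lemma germ_gen_eq: assumes s: "s < n" shows "germ_gen n op s = matof n d (unitv s, P s)"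
proof -
  have "germ_gen n op s = mat n n (\<lambda>(i,k). \<Sum>j\<in>{0..<n}.
      (if i = j then (if i = s then zeta d else 1) else 0) * (if k = op s j then 1 else 0))"
    unfolding germ_gen_def diag_at_def perm_mat_def mat_mult_mat d_def cs_psi_def by simp
  also have "\<dots> = matof n d (unitv s, P s)"
  proof (rule eq_matI)
    fix i k assume "i < dim_row (matof n d (unitv s, P s))" "k < dim_col (matof n d (unitv s, P s))"
    then have i: "i < n" and k: "k < n" by (auto simp: matof_def)
    have "(\<Sum>j\<in>{0..<n}. (if i = j then (if i = s then zeta d else 1) else 0) * (if k = op s j then 1 else 0))
      = (\<Sum>j\<in>{0..<n}. (if j = i then (if i = s then zeta d else 1) else 0) * (if k = op s j then 1 else 0))"
      by (rule sum.cong) auto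
    also have "\<dots> = (if i = s then zeta d else 1) * (if k = op s i then 1 else 0)"
      by (rule sum_single[OF i])
    finally show "mat n n (\<lambda>(i,k). \<Sum>j\<in>{0..<n}.
      (if i = j then (if i = s then zeta d else 1) else 0) * (if k = op s j then 1 else 0)) $$ (i, k)
      = matof n d (unitv s, P s) $$ (i, k)"
      using i k by (simp add: matof_def P_def unitv_def)
  qed (auto simp: matof_def)
  finally show ?thesis .
qed

lemma matof_ev_mult: "set w1 \<subseteq> {..<n} \<Longrightarrow> matof n m (ev w1) * matof n m (ev w2) = matof n m (ev (w1 @ w2))"
  using matof_mult[where x="ev w1"] rperm_lt[OF ev_rperm] by (simp add: ev_append)

lemma germ_sup: "set w \<subseteq> {..<n} \<Longrightarrow> matof n d (ev w) \<in> germ n op"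
proof (induction w)
  case Nil
  then show ?case unfolding germ_def using matof_one gen_subgroup.one by simp
next
  case (Cons s w)
  then have s: "s < n" and w: "set w \<subseteq> {..<n}" by auto
  have "matof n d (ev (s # w)) = matof n d (ev [s]) * matof n d (ev w)"
    using matof_ev_mult[of "[s]" d w] s by simp
  moreover have "ev [s] = (unitv s, P s)" by (simp add: ev.simps pmult_def)
  ultimately have "matof n d (ev (s # w)) = germ_gen n op s * matof n d (ev w)"
    using germ_gen_eq[OF s] by simp
  moreover have "germ_gen n op s \<in> germ n op" unfolding germ_def using s by (intro gen_subgroup.gen) auto
  ultimately show ?case using Cons.IH[OF w] unfolding germ_def by (simp add: gen_subgroup.mult)
qed

lemma germ_sub: "A \<in> germ n op \<Longrightarrow> \<exists>w. set w \<subseteq> {..<n} \<and> A = matof n d (ev w)"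
  unfolding germ_def
proof (induction rule: gen_subgroup.induct)
  case one
  then show ?case using matof_one by (intro exI[of _ "[]"]) simp
next
  case (gen A)
  then obtain s where s: "s < n" "A = germ_gen n op s" by auto
  have "ev [s] = (unitv s, P s)" by (simp add: ev.simps pmult_def)
  then show ?case using s germ_gen_eq[OF s(1)] by (intro exI[of _ "[s]"]) simp
next
  case (mult A B)
  then obtain w1 w2 where "set w1 \<subseteq> {..<n}" "A = matof n d (ev w1)" "set w2 \<subseteq> {..<n}" "B = matof n d (ev w2)"
    by blast
  then show ?case using matof_ev_mult by (intro exI[of _ "w1 @ w2"]) auto
next
  case (inv A B)
  then obtain w where w: "set w \<subseteq> {..<n}" "A = matof n d (ev w)" by blast
  define \<sigma> where "\<sigma> = snd (ev w)"
  define v where "v = fst (ev w)"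
  have r: "rperm n \<sigma>" unfolding \<sigma>_def using ev_rperm[OF w(1)] .
  define y where "y = (\<lambda>i. (d - 1) * v (pinv \<sigma> i))"
  have "supp0 n (\<lambda>i. (d - 1) * v i)" using ev_supp[OF w(1)] unfolding v_def supp0_def by simp
  then have "supp0 n y" unfolding y_def using supp0_comp[OF _ rperm_inv[OF r]] by fastforce
  then obtain w' where w': "set w' \<subseteq> {..<n}" "fst (ev w') = y" using ev_exists by blast
  have ww: "set (w @ w') \<subseteq> {..<n}" using w w' by auto
  have f: "fst (ev (w @ w')) i = d * v i" for i
  proof -
    have "fst (ev (w @ w')) i = v i + (d - 1) * v i"
      using w'(2) rperm_inv_f[OF r] unfolding y_def v_def \<sigma>_def by (simp add: ev_append pmult_def)
    also have "\<dots> = d * v i" using d_props(1) by (simp add: algebra_simps)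
    finally show ?thesis .
  qed
  have "snd (ev (w @ w')) = snd (ev [])"
    by (rule WDmod[OF ww]) (use f in auto)
  then have "matof n d (ev (w @ w')) = matof n d (\<lambda>_. 0, id)"
    by (intro matof_cong) (auto simp: f)
  then have AC: "A * matof n d (ev w') = 1\<^sub>m n"
    using matof_ev_mult[OF w(1)] w(2) matof_one by simp
  have "B = B * (A * matof n d (ev w'))" using AC inv.hyps(2) by (simp add: right_mult_one_mat)
  also have "\<dots> = (B * A) * matof n d (ev w')"
    using inv.hyps(2) w(2) by (simp add: assoc_mult_mat[OF inv.hyps(2) matof_carrier matof_carrier])
  also have "\<dots> = matof n d (ev w')" using inv.hyps(3) left_mult_one_mat[OF matof_carrier] by simp
  finally show ?case using w'(1) by blast
qed

lemma germ_char: "germ n op = {matof n d (ev w) | w. set w \<subseteq> {..<n}}"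
  using germ_sub germ_sup by blast

end


lemma iota_matof: assumes "q \<ge> 1" "q dvd d" "d \<ge> 1"
  shows "iota q d (matof n q x) = matof n q x"
proof (rule eq_matI)
  fix i j assume "i < dim_row (matof n q x)" "j < dim_col (matof n q x)"
  then have ij: "i < n" "j < n" by (auto simp: matof_def)
  have ent: "iota_entry q d (zeta q ^ a) = zeta q ^ a" for a
  proof -
    have nz: "zeta q ^ a \<noteq> 0" using zeta_ne0 by simp
    have ex: "\<exists>j. j < q \<and> zeta q ^ a = zeta q ^ j"
      using zeta_pow_mod[of q a] assms(1) by (intro exI[of _ "a mod q"]) auto
    define J where "J = (SOME j. j < q \<and> zeta q ^ a = zeta q ^ j)"
    have J: "J < q \<and> zeta q ^ a = zeta q ^ J" unfolding J_def using someI_ex[OF ex] .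
    have "iota_entry q d (zeta q ^ a) = zeta d ^ (J * (d div q))"
      unfolding J_def iota_entry_def if_not_P[OF nz] by (rule refl)
    also have "\<dots> = (zeta d ^ (d div q)) ^ J" by (simp add: power_mult[symmetric] mult.commute)
    also have "\<dots> = zeta q ^ J" using zeta_pow_div[OF assms] by simp
    finally show ?thesis using J by simp
  qed
  have "iota q d (matof n q x) $$ (i, j) = iota_entry q d (matof n q x $$ (i, j))"
    unfolding iota_def using ij by (simp add: matof_def)
  also have "\<dots> = matof n q x $$ (i, j)"
    using ij ent by (simp add: matof_def iota_entry_def)
  finally show "iota q d (matof n q x) $$ (i, j) = matof n q x $$ (i, j)" .
qed (auto simp: iota_def matof_def)

lemma matof_scale: assumes "q \<ge> 1" "d = q * m" "m \<ge> 1"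
  shows "matof n q x = matof n d (\<lambda>i. m * fst x i, snd x)"
proof -
  have d1: "d \<ge> 1" using assms by (simp add: Suc_le_eq)
  have m: "d div q = m" using assms by simp
  have "zeta d ^ m = zeta q" using zeta_pow_div[of q d] assms d1 m by simp
  then have zq: "zeta q ^ a = zeta d ^ (m * a)" for a by (simp add: power_mult)
  show ?thesis
  proof (rule eq_matI)
    fix i j assume "i < dim_row (matof n d (\<lambda>i. m * fst x i, snd x))" "j < dim_col (matof n d (\<lambda>i. m * fst x i, snd x))"
    then show "matof n q x $$ (i, j) = matof n d (\<lambda>i. m * fst x i, snd x) $$ (i, j)"
      using zq by (simp add: matof_def)
  qed (simp_all add: matof_def)
qed

lemma bez: assumes "a \<noteq> 0" "gcd a b dvd c" "(D::nat) \<ge> 1"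
  shows "\<exists>X Y. (a * X + b * Y) mod D = c mod D"
proof -
  obtain x y where xy: "a * x = b * y + gcd a b" using bezout_nat[OF assms(1)] by blast
  obtain k where k: "c = gcd a b * k" using assms(2) by blast
  have "a * (x * k) = (b * y + gcd a b) * k" using xy by (simp add: mult.assoc[symmetric])
  also have "\<dots> = b * (y * k) + c" using k by (simp add: algebra_simps)
  finally have "a * (x * k) = b * (y * k) + c" .
  moreover have "b * (y * k) + b * ((D - 1) * y * k) = D * (b * y * k)"
    using assms(3) by (simp add: algebra_simps)
  ultimately have "a * (x * k) + b * ((D - 1) * y * k) = c + D * (b * y * k)" by simp
  then have "(a * (x * k) + b * ((D - 1) * y * k)) mod D = c mod D" by simp
  then show ?thesis by blast
qed

context cset begin

definition opm :: "nat \<Rightarrow> nat \<Rightarrow> nat \<Rightarrow> nat" where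
  "opm m = (\<lambda>s t. cs_psik op m s t)"

lemma psik_bij: "s < n \<Longrightarrow> bij_betw (cs_psik op k s) {..<n} {..<n}"
proof (induction k arbitrary: s)
  case 0 then show ?case by (auto simp: bij_betw_def)
next
  case (Suc k)
  have "bij_betw (cs_psik op k (cs_T op s) \<circ> op s) {..<n} {..<n}"
    using bij_betw_trans[OF op_bij[OF Suc.prems] Suc.IH[OF T_lt[OF Suc.prems]]] .
  moreover have "cs_psi op s = op s" by (simp add: cs_psi_def fun_eq_iff)
  ultimately show ?case by (simp add: comp_def)
qed

lemma Q_chain: assumes s: "s < n" shows "snd (ev (chain s m)) = (\<lambda>j. if j < n then cs_psik op m s j else j)"
proof
  fix j show "snd (ev (chain s m)) j = (if j < n then cs_psik op m s j else j)"
    using ev_chain_snd[OF s] ev_rperm[OF chain_set[OF s]] by (simp add: rperm_def)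
qed

lemma opm_app: "opm m s t = cs_psik op m s t" by (simp add: opm_def)

lemma opm_cs: "cycle_set n (opm m)"
  unfolding cycle_set_def
proof (intro conjI allI impI)
  fix s assume s: "s < n"
  show "bij_betw (opm m s) {..<n} {..<n}" using psik_bij[OF s] by (simp add: opm_def)
next
  fix s t u assume s: "s < n" and t: "t < n" and u: "u < n"
  define a where "a = cs_psik op m s t"
  define b where "b = cs_psik op m t s"
  have a: "a < n" and b: "b < n" using psik_lt s t a_def b_def by auto
  define Qs where "Qs = snd (ev (chain s m))"
  define Qt where "Qt = snd (ev (chain t m))"
  have rQs: "rperm n Qs" and rQt: "rperm n Qt" unfolding Qs_def Qt_def using ev_rperm chain_set s t by auto
  have Qsv: "Qs j = cs_psik op m s j" if "j < n" for j unfolding Qs_def using ev_chain_snd[OF s that] .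
  have Qtv: "Qt j = cs_psik op m t j" if "j < n" for j unfolding Qt_def using ev_chain_snd[OF t that] .
  have W: "set (chain s m @ chain a m) \<subseteq> {..<n}" "set (chain t m @ chain b m) \<subseteq> {..<n}"
    using chain_set s t a b by auto
  have ua: "unitv a (Qs i) = unitv t i" for i
  proof -
    have "Qs t = a" using Qsv[OF t] a_def by simp
    then show ?thesis unfolding unitv_def using rperm_inj[OF rQs] by metis
  qed
  have ub: "unitv b (Qt i) = unitv s i" for i
  proof -
    have "Qt s = b" using Qtv[OF s] b_def by simp
    then show ?thesis unfolding unitv_def using rperm_inj[OF rQt] by metis
  qed
  have "fst (ev (chain s m @ chain a m)) = fst (ev (chain t m @ chain b m))"
  proof
    fix i
    show "fst (ev (chain s m @ chain a m)) i = fst (ev (chain t m @ chain b m)) i"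
      using ua[of i] ub[of i] unfolding Qs_def Qt_def
      by (simp add: ev_append pmult_def ev_chain_fst s t a b)
  qed
  then have "snd (ev (chain s m @ chain a m)) = snd (ev (chain t m @ chain b m))"
    by (rule WD[OF W])
  then have "snd (ev (chain a m)) (Qs u) = snd (ev (chain b m)) (Qt u)"
    unfolding Qs_def Qt_def by (simp add: ev_append pmult_def) (metis comp_apply)
  then have "cs_psik op m a (cs_psik op m s u) = cs_psik op m b (cs_psik op m t u)"
    using Qsv[OF u] Qtv[OF u] ev_chain_snd[OF a] ev_chain_snd[OF b] psik_lt s t u by simp
  then show "opm m (opm m s t) (opm m s u) = opm m (opm m t s) (opm m t u)"
    unfolding opm_def a_def b_def by simp
qed

lemma opm_psik: "s < n \<Longrightarrow> j < n \<Longrightarrow> cs_psik (opm m) k s j = cs_psik op (k * m) s j"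
proof (induction k arbitrary: s j)
  case 0 then show ?case by simp
next
  case (Suc k)
  have "cs_psik (opm m) (Suc k) s j = cs_psik (opm m) k (cs_T (opm m) s) (cs_psi (opm m) s j)" by simp
  also have "\<dots> = cs_psik (opm m) k ((cs_T op ^^ m) s) (cs_psik op m s j)"
    by (simp add: cs_T_def cs_psi_def opm_def psik_self)
  also have "\<dots> = cs_psik op (k * m) ((cs_T op ^^ m) s) (cs_psik op m s j)"
    using Suc.IH Tpow_lt psik_lt Suc.prems by simp
  also have "\<dots> = cs_psik op (m + k * m) s j" by (simp add: psik_add)
  finally show ?case by (simp add: add.commute)
qed

lemma opm_class: assumes m: "m \<ge> 1" "m dvd d" shows "cs_class n (opm m) = d div m"
proof -
  define q where "q = d div m"
  have dq: "d = q * m" using m unfolding q_def by simp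
  have q1: "q \<ge> 1" using dq d_props(1) by (metis Nat.le_0_eq mult_0 not_less_eq_eq One_nat_def less_eq_Suc_le zero_less_iff_neq_zero)
  have eq: "(k \<ge> 1 \<and> (\<forall>s<n. \<forall>j<n. cs_psik (opm m) k s j = j)) \<longleftrightarrow> (k \<ge> 1 \<and> q dvd k)" for k
  proof -
    have "(\<forall>s<n. \<forall>j<n. cs_psik (opm m) k s j = j) \<longleftrightarrow> Fix (k * m)" unfolding Fix_def using opm_psik by simp
    also have "\<dots> \<longleftrightarrow> d dvd k * m" by (rule Fix_iff)
    also have "\<dots> \<longleftrightarrow> q dvd k" unfolding dq using m(1) by simp
    finally show ?thesis by simp
  qed
  have "cs_class n (opm m) = (LEAST k. k \<ge> 1 \<and> q dvd k)" unfolding cs_class_def eq ..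
  also have "\<dots> = q"
  proof (rule Least_equality)
    show "q \<ge> 1 \<and> q dvd q" using q1 by simp
    show "\<And>y. 1 \<le> y \<and> q dvd y \<Longrightarrow> q \<le> y" by (simp add: dvd_imp_le)
  qed
  finally show ?thesis unfolding q_def .
qed

definition expand :: "nat \<Rightarrow> nat list \<Rightarrow> nat list" where
  "expand m w = concat (map (\<lambda>s. chain s m) w)"

lemma expand_set: "set w \<subseteq> {..<n} \<Longrightarrow> set (expand m w) \<subseteq> {..<n}"
  unfolding expand_def using chain_set by fastforce

lemma ev_expand: "set w \<subseteq> {..<n} \<Longrightarrow>
  ev (expand m w) = (\<lambda>i. m * fst (cset.ev n (opm m) w) i, snd (cset.ev n (opm m) w))"
proof (induction w)
  case Nil then show ?case by (simp add: expand_def cset.ev.simps(1)[OF cset.intro[OF opm_cs]] fun_eq_iff)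
next
  case (Cons s w)
  interpret C: cset n "opm m" by (rule cset.intro[OF opm_cs])
  have s: "s < n" and w: "set w \<subseteq> {..<n}" using Cons.prems by auto
  have cP: "snd (ev (chain s m)) = C.P s" unfolding Q_chain[OF s] C.P_def opm_app ..
  have "ev (expand m (s # w)) = pmult (ev (chain s m)) (ev (expand m w))"
    by (simp add: expand_def ev_append)
  also have "\<dots> = pmult (\<lambda>i. m * unitv s i, C.P s) (\<lambda>i. m * fst (C.ev w) i, snd (C.ev w))"
  proof -
    have ec: "ev (chain s m) = (\<lambda>i. m * unitv s i, C.P s)" using cP ev_chain_fst[OF s] by (simp add: prod_eq_iff)
    show ?thesis by (simp only: ec Cons.IH[OF w])
  qed
  also have "\<dots> = (\<lambda>i. m * fst (C.ev (s # w)) i, snd (C.ev (s # w)))"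
    by (simp add: pmult_def C.ev_fst C.ev_snd algebra_simps)
  finally show ?case .
qed

definition Sg :: "nat \<Rightarrow> complex mat set" where
  "Sg g = {matof n d (ev w) | w. set w \<subseteq> {..<n} \<and> (\<forall>i. g dvd fst (ev w) i)}"

lemma germ_opm: assumes m: "m \<ge> 1" "m dvd d"
  shows "iota (cs_class n (opm m)) d ` germ n (opm m) = Sg m"
proof -
  interpret C: cset n "opm m" by (rule cset.intro[OF opm_cs])
  define q where "q = d div m"
  have dq: "d = q * m" using m unfolding q_def by simp
  have q1: "q \<ge> 1" using dq d_props(1) by (metis Nat.le_0_eq mult_0 not_less_eq_eq One_nat_def less_eq_Suc_le zero_less_iff_neq_zero)
  have Cd: "C.d = q" unfolding C.d_def q_def using opm_class[OF m] .
  have qd: "q dvd d" using dq by simp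
  have "iota (cs_class n (opm m)) d ` germ n (opm m) = iota q d ` {matof n q (C.ev w) | w. set w \<subseteq> {..<n}}"
    using C.germ_char Cd opm_class[OF m] q_def by simp
  also have "\<dots> = {matof n q (C.ev w) | w. set w \<subseteq> {..<n}}"
  proof -
    have e: "{matof n q (C.ev w) | w. set w \<subseteq> {..<n}} = (\<lambda>w. matof n q (C.ev w)) ` {w. set w \<subseteq> {..<n}}"
      by auto
    show ?thesis unfolding e image_image iota_matof[OF q1 qd d_props(1)] ..
  qed
  also have "\<dots> = {matof n d (ev (expand m w)) | w. set w \<subseteq> {..<n}}"
  proof -
    have e1: "{matof n q (C.ev w) | w. set w \<subseteq> {..<n}} = (\<lambda>w. matof n q (C.ev w)) ` {w. set w \<subseteq> {..<n}}"
      by auto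
    have e2: "{matof n d (ev (expand m w)) | w. set w \<subseteq> {..<n}} = (\<lambda>w. matof n d (ev (expand m w))) ` {w. set w \<subseteq> {..<n}}"
      by auto
    have pw: "matof n q (C.ev w) = matof n d (ev (expand m w))" if "w \<in> {w. set w \<subseteq> {..<n}}" for w
    proof -
      have "ev (expand m w) = (\<lambda>i. m * fst (C.ev w) i, snd (C.ev w))" using ev_expand that by simp
      then show ?thesis using matof_scale[OF q1 dq m(1), of n "C.ev w"] by simp
    qed
    show ?thesis unfolding e1 e2 by (rule image_cong[OF refl pw])
  qed
  also have "\<dots> = Sg m"
  proof
    show "{matof n d (ev (expand m w)) | w. set w \<subseteq> {..<n}} \<subseteq> Sg m"
    proof
      fix A assume "A \<in> {matof n d (ev (expand m w)) | w. set w \<subseteq> {..<n}}"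
      then obtain w where w: "A = matof n d (ev (expand m w))" "set w \<subseteq> {..<n}" by blast
      have "\<forall>i. m dvd fst (ev (expand m w)) i" using ev_expand[OF w(2)] by simp
      then show "A \<in> Sg m" unfolding Sg_def using w expand_set[OF w(2)] by blast
    qed
    show "Sg m \<subseteq> {matof n d (ev (expand m w)) | w. set w \<subseteq> {..<n}}"
    proof
      fix A assume "A \<in> Sg m"
      then obtain w where w: "A = matof n d (ev w)" "set w \<subseteq> {..<n}" "\<forall>i. m dvd fst (ev w) i"
        unfolding Sg_def by blast
      define x where "x = (\<lambda>i. fst (ev w) i div m)"
      have "supp0 n x" using ev_supp[OF w(2)] unfolding x_def supp0_def by simp
      then obtain u where u: "set u \<subseteq> {..<n}" "fst (C.ev u) = x" using C.ev_exists by blast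
      have "fst (ev (expand m u)) = fst (ev w)"
        using ev_expand[OF u(1)] u(2) w(3) unfolding x_def by (simp add: fun_eq_iff)
      then have "ev (expand m u) = ev w" by (rule WD'[OF expand_set[OF u(1)] w(2)])
      then have "A = matof n d (ev (expand m u))" using w(1) by simp
      then show "A \<in> {matof n d (ev (expand m w)) | w. set w \<subseteq> {..<n}}" using u(1) by blast
    qed
  qed
  finally show ?thesis .
qed

end


context cset begin

lemma Sg_d: "Sg d = {1\<^sub>m n}"
proof
  show "Sg d \<subseteq> {1\<^sub>m n}"
  proof
    fix A assume "A \<in> Sg d"
    then obtain w where w: "A = matof n d (ev w)" "set w \<subseteq> {..<n}" "\<forall>i. d dvd fst (ev w) i"
      unfolding Sg_def by blast
    have "snd (ev w) = snd (ev [])"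
      by (rule WDmod[OF w(2)]) (use w(3) in \<open>auto simp: dvd_eq_mod_eq_0\<close>)
    then have "matof n d (ev w) = matof n d (\<lambda>_. 0, id)"
      by (intro matof_cong) (use w(3) in \<open>auto simp: dvd_eq_mod_eq_0\<close>)
    then show "A \<in> {1\<^sub>m n}" using w(1) matof_one by simp
  qed
  have "matof n d (ev []) \<in> Sg d" unfolding Sg_def by fastforce
  then show "{1\<^sub>m n} \<subseteq> Sg d" using matof_one by simp
qed

lemma Sg_1: "Sg 1 = germ n op"
  unfolding Sg_def germ_char by simp

lemma Sg_mult: assumes ab: "a \<ge> 1" "b \<ge> 1" "a dvd d" "b dvd d"
  shows "set_mult (Sg a) (Sg b) = Sg (gcd a b)"
proof
  show "set_mult (Sg a) (Sg b) \<subseteq> Sg (gcd a b)"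
  proof
    fix C assume "C \<in> set_mult (Sg a) (Sg b)"
    then obtain A B where C: "C = A * B" "A \<in> Sg a" "B \<in> Sg b" unfolding set_mult_def by blast
    obtain w1 where w1: "A = matof n d (ev w1)" "set w1 \<subseteq> {..<n}" "\<forall>i. a dvd fst (ev w1) i"
      using C(2) unfolding Sg_def by blast
    obtain w2 where w2: "B = matof n d (ev w2)" "set w2 \<subseteq> {..<n}" "\<forall>i. b dvd fst (ev w2) i"
      using C(3) unfolding Sg_def by blast
    have "C = matof n d (ev (w1 @ w2))" using C(1) w1(1) w2(1) matof_ev_mult[OF w1(2)] by simp
    moreover have "\<forall>i. gcd a b dvd fst (ev (w1 @ w2)) i"
    proof
      fix i
      have "fst (ev (w1 @ w2)) i = fst (ev w1) i + fst (ev w2) (snd (ev w1) i)"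
        by (simp add: ev_append pmult_def)
      moreover have "gcd a b dvd fst (ev w1) i" using w1(3) by (meson dvd_trans gcd_dvd1)
      moreover have "gcd a b dvd fst (ev w2) (snd (ev w1) i)" using w2(3) by (meson dvd_trans gcd_dvd2)
      ultimately show "gcd a b dvd fst (ev (w1 @ w2)) i" by simp
    qed
    moreover have "set (w1 @ w2) \<subseteq> {..<n}" using w1(2) w2(2) by simp
    ultimately show "C \<in> Sg (gcd a b)" unfolding Sg_def by blast
  qed
  show "Sg (gcd a b) \<subseteq> set_mult (Sg a) (Sg b)"
  proof
    fix C assume "C \<in> Sg (gcd a b)"
    then obtain w where w: "C = matof n d (ev w)" "set w \<subseteq> {..<n}" "\<forall>i. gcd a b dvd fst (ev w) i"
      unfolding Sg_def by blast
    define v where "v = fst (ev w)"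
    have ex: "\<forall>i. \<exists>p. (a * fst p + b * snd p) mod d = v i mod d"
    proof
      fix i
      have "a \<noteq> 0" using ab(1) by simp
      then obtain X Y where "(a * X + b * Y) mod d = v i mod d"
        using bez[OF _ w(3)[rule_format, of i] d_props(1)] unfolding v_def by blast
      then show "\<exists>p. (a * fst p + b * snd p) mod d = v i mod d" by (intro exI[of _ "(X, Y)"]) simp
    qed
    obtain f where f: "\<forall>i. (a * fst (f i) + b * snd (f i)) mod d = v i mod d"
      using choice[OF ex] by blast
    define X where "X = (\<lambda>i. if i < n then fst (f i) else 0)"
    define Y where "Y = (\<lambda>i. if i < n then snd (f i) else 0)"
    have vs: "supp0 n v" unfolding v_def using ev_supp[OF w(2)] .
    have XY: "(a * X i + b * Y i) mod d = v i mod d" for i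
      using f vs unfolding X_def Y_def supp0_def by (cases "i < n") auto
    have "supp0 n (\<lambda>i. a * X i)" unfolding supp0_def X_def by simp
    then obtain w1 where w1: "set w1 \<subseteq> {..<n}" "fst (ev w1) = (\<lambda>i. a * X i)" using ev_exists by blast
    define \<sigma> where "\<sigma> = snd (ev w1)"
    have r: "rperm n \<sigma>" unfolding \<sigma>_def using ev_rperm[OF w1(1)] .
    have "supp0 n (\<lambda>i. b * Y i)" unfolding supp0_def Y_def by simp
    then have "supp0 n (\<lambda>i. b * Y (pinv \<sigma> i))" using supp0_comp[OF _ rperm_inv[OF r]] by fastforce
    then obtain w2 where w2: "set w2 \<subseteq> {..<n}" "fst (ev w2) = (\<lambda>i. b * Y (pinv \<sigma> i))"
      using ev_exists by blast
    have f12: "fst (ev (w1 @ w2)) i = a * X i + b * Y i" for i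
      using w1(2) w2(2) rperm_inv_f[OF r] unfolding \<sigma>_def by (simp add: ev_append pmult_def)
    have w12: "set (w1 @ w2) \<subseteq> {..<n}" using w1(1) w2(1) by simp
    have sn: "snd (ev (w1 @ w2)) = snd (ev w)"
      by (rule WDmod[OF w12 w(2)]) (use f12 XY v_def in simp)
    have "matof n d (ev w) = matof n d (ev (w1 @ w2))"
      by (rule matof_cong) (use f12 XY v_def sn in simp)+
    also have "\<dots> = matof n d (ev w1) * matof n d (ev w2)" using matof_ev_mult[OF w1(1)] by simp
    finally have Cm: "C = matof n d (ev w1) * matof n d (ev w2)" using w(1) by simp
    have "matof n d (ev w1) \<in> Sg a" unfolding Sg_def using w1 by fastforce
    moreover have "matof n d (ev w2) \<in> Sg b" unfolding Sg_def using w2 by fastforce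
    ultimately show "C \<in> set_mult (Sg a) (Sg b)" unfolding set_mult_def using Cm by blast
  qed
qed

lemma foldr_gcd_dvd: fixes m :: "nat \<Rightarrow> nat" shows "i \<in> set L \<Longrightarrow> foldr (\<lambda>i g. gcd (m i) g) L d0 dvd m i"
proof (induction L)
  case Nil then show ?case by simp
next
  case (Cons j L)
  show ?case
  proof (cases "i = j")
    case True
    have "gcd (m j) (foldr (\<lambda>i g. gcd (m i) g) L d0) dvd m j" by (rule gcd_dvd1)
    then show ?thesis using True by simp
  next
    case False
    then have "i \<in> set L" using Cons.prems by simp
    then have "foldr (\<lambda>i g. gcd (m i) g) L d0 dvd m i" by (rule Cons.IH)
    then show ?thesis by (simp add: dvd_trans[OF gcd_dvd2])
  qed
qed

lemma foldr_Sg: fixes m :: "nat \<Rightarrow> nat" assumes "\<forall>i\<in>set L. m i \<ge> 1 \<and> m i dvd d"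
  shows "foldr set_mult (map (\<lambda>i. Sg (m i)) L) {1\<^sub>m n} = Sg (foldr (\<lambda>i g. gcd (m i) g) L d)
    \<and> foldr (\<lambda>i g. gcd (m i) g) L d dvd d"
  using assms
proof (induction L)
  case Nil then show ?case using Sg_d by simp
next
  case (Cons j L)
  define g where "g = foldr (\<lambda>i g. gcd (m i) g) L d"
  have IH: "foldr set_mult (map (\<lambda>i. Sg (m i)) L) {1\<^sub>m n} = Sg g" "g dvd d"
    using Cons unfolding g_def by auto
  have g1: "g \<ge> 1" using IH(2) d_props(1) by (metis dvd_0_left_iff not_one_le_zero less_one not_le)
  have mj: "m j \<ge> 1" "m j dvd d" using Cons.prems by auto
  have "foldr set_mult (map (\<lambda>i. Sg (m i)) (j # L)) {1\<^sub>m n} = set_mult (Sg (m j)) (Sg g)"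
    using IH(1) by simp
  also have "\<dots> = Sg (gcd (m j) g)" by (rule Sg_mult[OF mj(1) g1 mj(2) IH(2)])
  finally show ?case using IH(2) unfolding g_def by (auto intro: dvd_trans)
qed

end

theorem mainTheorem1:
  fixes n :: nat and op :: "nat \<Rightarrow> nat \<Rightarrow> nat" and ps :: "nat list"
  assumes "cycle_set n op"
    and "cs_class n op > 1"
    and "distinct ps"
    and "set ps = prime_factors (cs_class n op)"
  shows "\<exists>ops :: nat \<Rightarrow> nat \<Rightarrow> nat \<Rightarrow> nat.
           (\<forall>i < length ps. cycle_set n (ops i) \<and> (\<exists>k. cs_class n (ops i) = (ps ! i) ^ k)) \<and>
           germ n op = set_prod_list n
              (map (\<lambda>i. iota (cs_class n (ops i)) (cs_class n op) ` germ n (ops i)) [0..<length ps])"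
proof -
  interpret C: cset n op by (rule cset.intro[OF assms(1)])
  define d where "d = cs_class n op"
  have dC: "C.d = d" unfolding C.d_def d_def ..
  have d0: "d \<noteq> 0" using C.d_props(1) dC by simp
  define e where "e = (\<lambda>i. multiplicity (ps ! i) d)"
  define q where "q = (\<lambda>i. (ps ! i) ^ e i)"
  define m where "m = (\<lambda>i. d div q i)"
  define ops where "ops = (\<lambda>i. C.opm (m i))"
  have pr: "prime (ps ! i) \<and> ps ! i dvd d" if "i < length ps" for i
  proof -
    have "ps ! i \<in> prime_factors d" using nth_mem[OF that] assms(4) unfolding d_def by simp
    then show ?thesis by (simp add: in_prime_factors_iff)
  qed
  have qd: "q i dvd d" for i unfolding q_def e_def by (rule multiplicity_dvd)
  have q0: "q i \<noteq> 0" for i using qd[of i] d0 by auto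
  have dqm: "d = q i * m i" for i unfolding m_def using qd[of i] by simp
  have m1: "m i \<ge> 1" for i using dqm[of i] d0 by (cases "m i = 0") auto
  have md: "m i dvd d" for i using dqm[of i] by simp
  have cls: "cs_class n (ops i) = q i" for i
  proof -
    have "cs_class n (ops i) = C.d div m i" unfolding ops_def by (rule C.opm_class[OF m1 md[folded dC]])
    also have "\<dots> = q i" using dqm[of i] m1[of i] dC by simp
    finally show ?thesis .
  qed
  have part1: "\<forall>i < length ps. cycle_set n (ops i) \<and> (\<exists>k. cs_class n (ops i) = (ps ! i) ^ k)"
  proof (intro allI impI conjI)
    fix i assume "i < length ps"
    show "cycle_set n (ops i)" unfolding ops_def by (rule C.opm_cs)
    show "\<exists>k. cs_class n (ops i) = ps ! i ^ k" using cls[of i] unfolding q_def by blast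
  qed
  have maps: "map (\<lambda>i. iota (cs_class n (ops i)) (cs_class n op) ` germ n (ops i)) [0..<length ps]
      = map (\<lambda>i. C.Sg (m i)) [0..<length ps]"
  proof (rule map_cong[OF refl])
    fix i show "iota (cs_class n (ops i)) (cs_class n op) ` germ n (ops i) = C.Sg (m i)"
      using C.germ_opm[OF m1 md[folded dC]] dC unfolding ops_def d_def by simp
  qed
  define g where "g = foldr (\<lambda>i g. gcd (m i) g) [0..<length ps] d"
  have fo: "foldr set_mult (map (\<lambda>i. C.Sg (m i)) [0..<length ps]) {1\<^sub>m n} = C.Sg g" "g dvd d"
  proof -
    have "\<forall>i\<in>set [0..<length ps]. m i \<ge> 1 \<and> m i dvd C.d" using m1 md dC by simp
    from C.foldr_Sg[OF this] show "foldr set_mult (map (\<lambda>i. C.Sg (m i)) [0..<length ps]) {1\<^sub>m n} = C.Sg g" "g dvd d"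
      using dC unfolding g_def by simp_all
  qed
  have g1: "g = 1"
  proof (rule ccontr)
    assume "g \<noteq> 1"
    then obtain p where p: "prime p" "p dvd g" using prime_factor_nat by blast
    have "p dvd d" using p(2) fo(2) by (rule dvd_trans)
    then have "p \<in> prime_factors d" using p(1) d0 by (simp add: in_prime_factors_iff)
    then have "p \<in> set ps" using assms(4) unfolding d_def by simp
    then obtain i where i: "i < length ps" "ps ! i = p" by (auto simp: in_set_conv_nth)
    have "i \<in> set [0..<length ps]" using i(1) by simp
    then have "g dvd m i" unfolding g_def by (rule C.foldr_gcd_dvd)
    then have "p dvd m i" by (rule dvd_trans[OF p(2)])
    moreover have "\<not> p dvd m i"
    proof -
      have nu: "\<not> is_unit p" using p(1) not_prime_unit by blast
      have "\<not> p dvd d div p ^ multiplicity p d" by (rule multiplicity_decompose[OF d0 nu])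
      then show ?thesis unfolding m_def q_def e_def i(2) .
    qed
    ultimately show False by simp
  qed
  have "germ n op = set_prod_list n (map (\<lambda>i. iota (cs_class n (ops i)) (cs_class n op) ` germ n (ops i)) [0..<length ps])"
    unfolding set_prod_list_def maps fo(1) g1 C.Sg_1 ..
  then show ?thesis using part1 by (intro exI[of _ ops] conjI)
qed


end
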